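(* Let $\mathcal{H},\mathcal{K}$ be complex Hilbert spaces and $(f_*,f^* ):(\mathsf{P}(\mathcal{H}),\mathsf{L}(\mathcal{H}),\bar e_{\mathcal{H}})\to(\mathsf{P}(\mathcal{K}),\mathsf{L}(\mathcal{K}),\bar e_{\mathcal{K}})$ a Chu morphism with $f_*$ injective. Then for all nonzero $\phi,\psi\in\mathcal{H}$: $\phi\perp\psi$ if and only if the rays $f_*([\phi])$ and $f_*([\psi])$ are orthogonal.
   Context: A Chu morphism $(X,A,e)\to(X',A',e')$ between Chu spaces over $[0,1]$ is a pair $(f_*:X\to X',f^*:A'\to A)$ with $e(x,f^*(a'))=e'(f_*(x),a')$ for all $x\in X,a'\in A'$. For a complex Hilbert space $\mathcal{H}$: $\mathsf{L}(\mathcal{H})$ is the set of closed subspaces, $P_S$ the orthogonal projector onto $S$, $\mathsf{P}(\mathcal{H})$ the set of rays $[\psi]=\{\lambda\psi:\lambda\in\mathbb{C}\}$, $\psi\ne0$, and $\bar e_{\mathcal{H}}([\psi],S)=\|P_S\psi\|^2/\|\psi\|^2$. *)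

theory Defs
  imports "HOL-Analysis.Analysis"
begin

text \<open>A complex Hilbert space: a real Banach space carrying a complex scalar
multiplication compatible with the real one, and a complex inner product
(linear in the second argument, conjugate symmetric) inducing the norm.\<close>

class chilbert = banach +
  fixes scaleC :: "complex \<Rightarrow> 'a \<Rightarrow> 'a"
    and cinner :: "'a \<Rightarrow> 'a \<Rightarrow> complex"
  assumes scaleC_add_right: "scaleC c (x + y) = scaleC c x + scaleC c y"
    and scaleC_add_left: "scaleC (a + b) x = scaleC a x + scaleC b x"
    and scaleC_scaleC: "scaleC a (scaleC b x) = scaleC (a * b) x"
    and scaleC_one: "scaleC 1 x = x"
    and scaleC_of_real: "scaleC (complex_of_real r) x = scaleR r x"
    and cinner_add_right: "cinner x (y + z) = cinner x y + cinner x z"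
    and cinner_scaleC_right: "cinner x (scaleC c y) = c * cinner x y"
    and cinner_commute: "cinner y x = cnj (cinner x y)"
    and cinner_self_norm: "cinner x x = complex_of_real ((norm x)\<^sup>2)"

definition closed_csubspace :: "'a::chilbert set \<Rightarrow> bool" where
  "closed_csubspace S \<longleftrightarrow> 0 \<in> S \<and> (\<forall>x\<in>S. \<forall>y\<in>S. x + y \<in> S)
     \<and> (\<forall>c. \<forall>x\<in>S. scaleC c x \<in> S) \<and> closed S"

definition subspaces_L :: "'a::chilbert set set" where
  "subspaces_L = {S. closed_csubspace S}"

definition proj :: "'a::chilbert set \<Rightarrow> 'a \<Rightarrow> 'a" where
  "proj S \<psi> = (THE y. y \<in> S \<and> (\<forall>z\<in>S. cinner z (\<psi> - y) = 0))"

definition ray :: "'a::chilbert \<Rightarrow> 'a set" where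
  "ray \<psi> = {scaleC c \<psi> | c. True}"

definition rays_P :: "'a::chilbert set set" where
  "rays_P = {ray \<psi> | \<psi>. \<psi> \<noteq> 0}"

text \<open>Evaluation \<open>e([\<psi>],S) = \<parallel>P_S \<psi>\<parallel>\<^sup>2 / \<parallel>\<psi>\<parallel>\<^sup>2\<close>, computed with a nonzero
representative of the ray (independent of the choice).\<close>
definition rep :: "'a::chilbert set \<Rightarrow> 'a" where
  "rep r = (SOME \<psi>. \<psi> \<in> r \<and> \<psi> \<noteq> 0)"

definition ebar :: "'a::chilbert set \<Rightarrow> 'a set \<Rightarrow> real" where
  "ebar r S = (norm (proj S (rep r)))\<^sup>2 / (norm (rep r))\<^sup>2"

definition chu_morphism ::
  "'x set \<Rightarrow> 'a set \<Rightarrow> ('x \<Rightarrow> 'a \<Rightarrow> real) \<Rightarrow> 'y set \<Rightarrow> 'b set \<Rightarrow> ('y \<Rightarrow> 'b \<Rightarrow> real)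
   \<Rightarrow> ('x \<Rightarrow> 'y) \<Rightarrow> ('b \<Rightarrow> 'a) \<Rightarrow> bool" where
  "chu_morphism X A e X' A' e' fs fa \<longleftrightarrow>
     (\<forall>x\<in>X. fs x \<in> X') \<and> (\<forall>a'\<in>A'. fa a' \<in> A) \<and>
     (\<forall>x\<in>X. \<forall>a'\<in>A'. e x (fa a') = e' (fs x) a')"

definition rays_orth :: "'a::chilbert set \<Rightarrow> 'a set \<Rightarrow> bool" where
  "rays_orth r s \<longleftrightarrow> (\<forall>u\<in>r. \<forall>v\<in>s. cinner u v = 0)"

end

theory Submission imports Defs begin

lemma scaleC_zero_left[simp]: "scaleC 0 (x::'a::chilbert) = 0"
  using scaleC_of_real[of 0 x] by simp

lemma scaleC_minus1: "scaleC (-1) (x::'a::chilbert) = - x"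
  using scaleC_of_real[of "-1" x] by simp

lemma scaleC_zero_right[simp]: "scaleC c (0::'a::chilbert) = 0"
  using scaleC_add_right[of c 0 0] by simp

lemma scaleC_minus_right: "scaleC c (- (x::'a::chilbert)) = - scaleC c x"
proof -
  have "scaleC c (- x) = scaleC c (scaleC (-1) x)" by (simp only: scaleC_minus1)
  also have "\<dots> = scaleC (-1) (scaleC c x)" by (simp only: scaleC_scaleC mult.commute)
  finally show ?thesis by (simp only: scaleC_minus1)
qed

lemma scaleC_minus_left: "scaleC (- c) (x::'a::chilbert) = - scaleC c x"
proof -
  have "scaleC (- c) x = scaleC (-1) (scaleC c x)" by (simp only: scaleC_scaleC mult_minus1)
  then show ?thesis by (simp only: scaleC_minus1)
qed

lemma scaleC_diff_right: "scaleC c ((x::'a::chilbert) - y) = scaleC c x - scaleC c y"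
  by (simp only: diff_conv_add_uminus scaleC_add_right scaleC_minus_right)

lemma cinner_add_left: "cinner ((x::'a::chilbert) + y) z = cinner x z + cinner y z"
proof -
  have "cinner (x + y) z = cnj (cinner z (x + y))" by (rule cinner_commute)
  also have "\<dots> = cnj (cinner z x) + cnj (cinner z y)" by (simp only: cinner_add_right complex_cnj_add)
  also have "\<dots> = cinner x z + cinner y z" by (simp only: cinner_commute[of x z] cinner_commute[of y z])
  finally show ?thesis .
qed

lemma cinner_scaleC_left: "cinner (scaleC c (x::'a::chilbert)) y = cnj c * cinner x y"
proof -
  have "cinner (scaleC c x) y = cnj (cinner y (scaleC c x))" by (rule cinner_commute)
  also have "\<dots> = cnj c * cnj (cinner y x)" by (simp only: cinner_scaleC_right complex_cnj_mult)
  also have "\<dots> = cnj c * cinner x y" by (simp only: cinner_commute[of x y])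
  finally show ?thesis .
qed

lemma cinner_zero_right[simp]: "cinner (x::'a::chilbert) 0 = 0"
  using cinner_add_right[of x 0 0] by simp

lemma cinner_zero_left[simp]: "cinner 0 (x::'a::chilbert) = 0"
  using cinner_add_left[of 0 0 x] by simp

lemma cinner_minus_right: "cinner (x::'a::chilbert) (- y) = - cinner x y"
proof -
  have "cinner x (- y) = cinner x (scaleC (-1) y)" by (simp only: scaleC_minus1)
  then show ?thesis by (simp only: cinner_scaleC_right mult_minus1)
qed

lemma cinner_minus_left: "cinner (- (x::'a::chilbert)) y = - cinner x y"
proof -
  have "cinner (- x) y = cinner (scaleC (-1) x) y" by (simp only: scaleC_minus1)
  then show ?thesis by (simp add: cinner_scaleC_left)
qed

lemma cinner_diff_right: "cinner (x::'a::chilbert) (y - z) = cinner x y - cinner x z"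
  by (simp only: diff_conv_add_uminus cinner_add_right cinner_minus_right)

lemma cinner_diff_left: "cinner ((x::'a::chilbert) - y) z = cinner x z - cinner y z"
  by (simp only: diff_conv_add_uminus cinner_add_left cinner_minus_left)

lemma norm_sq_cinner: "(norm (x::'a::chilbert))^2 = Re (cinner x x)"
  by (simp add: cinner_self_norm)

lemma cinner_self_eq_0: "cinner (x::'a::chilbert) x = 0 \<longleftrightarrow> x = 0"
  by (simp add: cinner_self_norm)

lemma norm_scaleC: "norm (scaleC c (x::'a::chilbert)) = cmod c * norm x"
proof -
  have "complex_of_real ((norm (scaleC c x))^2) = cinner (scaleC c x) (scaleC c x)"
    by (rule cinner_self_norm[symmetric])
  also have "\<dots> = cnj c * (c * cinner x x)"
    by (simp add: cinner_scaleC_left cinner_scaleC_right)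
  also have "\<dots> = (c * cnj c) * complex_of_real ((norm x)^2)"
    by (simp only: cinner_self_norm[of x] mult_ac)
  also have "\<dots> = complex_of_real ((cmod c * norm x)^2)"
    by (simp only: complex_norm_square[symmetric] power_mult_distrib of_real_mult)
  finally have "(norm (scaleC c x))^2 = (cmod c * norm x)^2" using of_real_eq_iff by blast
  then show ?thesis by (simp add: power2_eq_iff_nonneg)
qed

lemma norm_add_sq: "(norm ((x::'a::chilbert) + y))^2 = (norm x)^2 + (norm y)^2 + 2 * Re (cinner x y)"
proof -
  have "cinner (x+y) (x+y) = cinner x x + cinner y y + (cinner x y + cnj (cinner x y))"
    by (simp add: cinner_add_left cinner_add_right cinner_commute[of x y])
  then have "Re (cinner (x+y) (x+y)) = Re (cinner x x) + Re (cinner y y) + 2 * Re (cinner x y)"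
    by simp
  then show ?thesis by (simp add: norm_sq_cinner)
qed

lemma norm_diff_sq: "(norm ((x::'a::chilbert) - y))^2 = (norm x)^2 + (norm y)^2 - 2 * Re (cinner x y)"
  using norm_add_sq[of x "-y"] by (simp add: cinner_minus_right)

lemma key_sq:
  fixes r z :: "'a::chilbert"
  assumes "z \<noteq> 0"
  shows "(norm (r - scaleC (cinner z r / complex_of_real ((norm z)^2)) z))^2
       = (norm r)^2 - (cmod (cinner z r))^2 / (norm z)^2"
proof -
  define t where "t = cinner z r / complex_of_real ((norm z)^2)"
  have nz: "norm z \<noteq> 0" using assms by simp
  have ct: "cmod t = cmod (cinner z r) / (norm z)^2"
    by (simp add: t_def norm_divide norm_power)
  have tz: "cmod t * norm z = cmod (cinner z r) / norm z"
    using nz by (simp add: ct power2_eq_square)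
  have a: "(norm (scaleC t z))^2 = (cmod (cinner z r))^2 / (norm z)^2"
    by (simp only: norm_scaleC tz power_divide)
  have "cinner r (scaleC t z) = t * cnj (cinner z r)"
    by (simp add: cinner_scaleC_right cinner_commute[of r z])
  also have "\<dots> = (cinner z r * cnj (cinner z r)) / complex_of_real ((norm z)^2)"
    by (simp add: t_def)
  also have "\<dots> = complex_of_real ((cmod (cinner z r))^2 / (norm z)^2)"
    by (simp only: complex_norm_square[symmetric] of_real_divide)
  finally have b: "Re (cinner r (scaleC t z)) = (cmod (cinner z r))^2 / (norm z)^2"
    by simp
  show ?thesis unfolding t_def[symmetric] norm_diff_sq a b by simp
qed

lemma cauchy_schwarz: "cmod (cinner (x::'a::chilbert) y) \<le> norm x * norm y"
proof (cases "x = 0")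
  case True then show ?thesis by simp
next
  case False
  have "0 \<le> (norm y)^2 - (cmod (cinner x y))^2 / (norm x)^2"
    using key_sq[OF False, of y] by (metis zero_le_power2)
  then have "(cmod (cinner x y))^2 \<le> (norm x * norm y)^2"
    using False by (simp add: field_simps power_mult_distrib)
  then show ?thesis by (simp add: power2_le_iff_abs_le)
qed

lemma csub_facts:
  assumes "closed_csubspace (A::'a::chilbert set)"
  shows "0 \<in> A" "\<And>x y. x \<in> A \<Longrightarrow> y \<in> A \<Longrightarrow> x + y \<in> A"
    "\<And>c x. x \<in> A \<Longrightarrow> scaleC c x \<in> A" "closed A"
    "\<And>x y. x \<in> A \<Longrightarrow> y \<in> A \<Longrightarrow> x - y \<in> A"
    "\<And>r x. x \<in> A \<Longrightarrow> scaleR r x \<in> A"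
proof -
  show A0: "0 \<in> A" and Aadd: "\<And>x y. x \<in> A \<Longrightarrow> y \<in> A \<Longrightarrow> x + y \<in> A"
    and Asc: "\<And>c x. x \<in> A \<Longrightarrow> scaleC c x \<in> A" and "closed A"
    using assms unfolding closed_csubspace_def by auto
  show "\<And>x y. x \<in> A \<Longrightarrow> y \<in> A \<Longrightarrow> x - y \<in> A"
  proof -
    fix x y assume "x \<in> A" "y \<in> A"
    then have "x + scaleC (-1) y \<in> A" using Aadd Asc by blast
    then show "x - y \<in> A" by (simp add: scaleC_minus1)
  qed
  show "\<And>r x. x \<in> A \<Longrightarrow> scaleR r x \<in> A"
  proof -
    fix r x assume "x \<in> A"
    then have "scaleC (complex_of_real r) x \<in> A" using Asc by blast
    then show "scaleR r x \<in> A" by (simp add: scaleC_of_real)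
  qed
qed

lemma proj_exists:
  fixes A :: "'a::chilbert set"
  assumes A: "closed_csubspace A"
  shows "\<exists>y\<in>A. \<forall>z\<in>A. cinner z (\<psi> - y) = 0"
proof -
  note AF = csub_facts[OF A]
  define f where "f a = (norm (\<psi> - a))^2" for a
  define D where "D = Inf (f ` A)"
  have bdd: "bdd_below (f ` A)" by (rule bdd_belowI[of _ 0]) (auto simp: f_def)
  have Dle: "\<And>a. a \<in> A \<Longrightarrow> D \<le> f a" unfolding D_def using bdd by (auto intro: cInf_lower)
  have "\<forall>n. \<exists>a\<in>A. f a < D + inverse (real (Suc n))"
  proof
    fix n
    have "f ` A \<noteq> {}" using AF(1) by auto
    moreover have "D < D + inverse (real (Suc n))" by simp
    ultimately have "\<exists>v\<in>f`A. v < D + inverse (real (Suc n))"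
      using cInf_lessD[of "f ` A" "D + inverse (real (Suc n))"] unfolding D_def by simp
    then show "\<exists>a\<in>A. f a < D + inverse (real (Suc n))" by auto
  qed
  then have "\<forall>n. \<exists>x. x \<in> A \<and> f x < D + inverse (real (Suc n))" by blast
  then have "\<exists>a. \<forall>n. a n \<in> A \<and> f (a n) < D + inverse (real (Suc n))" by (rule choice)
  then obtain a where a: "\<forall>n. a n \<in> A \<and> f (a n) < D + inverse (real (Suc n))" by (elim exE)
  have aA: "\<And>n. a n \<in> A" and af: "\<And>n. f (a n) < D + inverse (real (Suc n))"
    using a by blast+
  have par: "\<And>u v::'a. (norm (u - v))^2 + (norm (u + v))^2 = 2*(norm u)^2 + 2*(norm v)^2"
    by (simp add: norm_add_sq norm_diff_sq)
  have bound: "(norm (a m - a n))^2 \<le> 2 * inverse (real (Suc m)) + 2 * inverse (real (Suc n))" for m n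
  proof -
    define mid where "mid = scaleR (1/2) (a m + a n)"
    have "mid \<in> A" unfolding mid_def by (intro AF(6) AF(2) aA)
    hence Dm: "D \<le> f mid" by (rule Dle)
    have e1: "(\<psi> - a n) + (\<psi> - a m) = scaleR 2 (\<psi> - mid)"
    proof -
      have "scaleR 2 (\<psi> - mid) = scaleR 2 \<psi> - (a m + a n)"
        by (simp add: mid_def scaleR_right_diff_distrib)
      then show ?thesis by (simp add: scaleR_2 algebra_simps)
    qed
    have e2: "(\<psi> - a n) - (\<psi> - a m) = a m - a n" by simp
    have "(norm (a m - a n))^2 + 4 * f mid = 2 * f (a n) + 2 * f (a m)"
      using par[of "\<psi> - a n" "\<psi> - a m"] unfolding e1 e2 f_def
      by (simp add: power_mult_distrib)
    then show ?thesis using Dm af[of m] af[of n] by linarith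
  qed
  have "Cauchy a"
  proof (rule CauchyI)
    fix e :: real assume e: "0 < e"
    obtain M :: nat where M: "4 / e^2 < real M" using reals_Archimedean2 by blast
    have "\<forall>m\<ge>M. \<forall>n\<ge>M. norm (a m - a n) < e"
    proof (intro allI impI)
      fix m n assume mn: "m \<ge> M" "n \<ge> M"
      have "inverse (real (Suc m)) \<le> inverse (real (Suc M))"
        "inverse (real (Suc n)) \<le> inverse (real (Suc M))"
        using mn by (simp_all add: le_imp_inverse_le)
      then have "(norm (a m - a n))^2 \<le> 4 * inverse (real (Suc M))"
        using bound[of m n] by linarith
      also have "\<dots> < e^2"
      proof -
        have e2: "0 < e^2" using e by simp
        have "4 < e^2 * real M" using M e2 by (simp add: pos_divide_less_eq mult.commute)
        also have "\<dots> \<le> e^2 * real (Suc M)" using e2 by simp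
        finally have "4 < e^2 * real (Suc M)" .
        then have "4 / real (Suc M) < e^2"
          by (subst pos_divide_less_eq) (simp_all add: mult.commute)
        then show ?thesis by (simp add: divide_inverse)
      qed
      finally show "norm (a m - a n) < e"
        by (rule power_less_imp_less_base) (use e in simp)
    qed
    then show "\<exists>M. \<forall>m\<ge>M. \<forall>n\<ge>M. norm (a m - a n) < e" by (rule exI)
  qed
  then have "convergent a" by (rule Cauchy_convergent)
  then obtain y where lim: "a \<longlonglongrightarrow> y" unfolding convergent_def by (elim exE)
  have yA: "y \<in> A" using closed_sequentially[OF AF(4) aA lim] .
  have fy: "f y \<le> D"
  proof -
    have l1: "(\<lambda>n. f (a n)) \<longlonglongrightarrow> f y" unfolding f_def by (intro tendsto_intros lim)
    have l2: "(\<lambda>n. D + inverse (real (Suc n))) \<longlonglongrightarrow> D"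
      using tendsto_add[OF tendsto_const LIMSEQ_inverse_real_of_nat, of D] by simp
    have "\<exists>N. \<forall>n\<ge>N. f (a n) \<le> D + inverse (real (Suc n))"
      by (intro exI[of _ 0] allI impI less_imp_le af)
    then show ?thesis by (rule LIMSEQ_le[OF l1 l2])
  qed
  have "\<forall>z\<in>A. cinner z (\<psi> - y) = 0"
  proof
    fix z assume zA: "z \<in> A"
    show "cinner z (\<psi> - y) = 0"
    proof (cases "z = 0")
      case False
      define t where "t = cinner z (\<psi> - y) / complex_of_real ((norm z)^2)"
      have "y + scaleC t z \<in> A" by (intro AF(2) AF(3) yA zA)
      hence "D \<le> f (y + scaleC t z)" by (rule Dle)
      moreover have "f (y + scaleC t z) = (norm (\<psi> - y))^2 - (cmod (cinner z (\<psi> - y)))^2 / (norm z)^2"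
      proof -
        have e: "\<psi> - (y + scaleC t z) = (\<psi> - y) - scaleC t z" by (simp add: algebra_simps)
        show ?thesis unfolding f_def e using key_sq[OF False, of "\<psi> - y", folded t_def] .
      qed
      ultimately have "(cmod (cinner z (\<psi> - y)))^2 / (norm z)^2 \<le> 0"
        using fy unfolding f_def by linarith
      moreover have "(norm z)^2 > 0" using False by simp
      ultimately have "(cmod (cinner z (\<psi> - y)))^2 \<le> 0" by (simp add: divide_le_0_iff)
      then have "cmod (cinner z (\<psi> - y)) = 0" by simp
      then show ?thesis by simp
    qed simp
  qed
  then show ?thesis using yA by blast
qed

lemma proj_ex1:
  fixes A :: "'a::chilbert set"
  assumes A: "closed_csubspace A"
  shows "\<exists>!y. y \<in> A \<and> (\<forall>z\<in>A. cinner z (\<psi> - y) = 0)"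
proof -
  obtain y where y: "y \<in> A" "\<forall>z\<in>A. cinner z (\<psi> - y) = 0" using proj_exists[OF A] by blast
  show ?thesis
  proof (rule ex1I[of _ y])
    show "y \<in> A \<and> (\<forall>z\<in>A. cinner z (\<psi> - y) = 0)" using y by blast
  next
    fix y' assume y': "y' \<in> A \<and> (\<forall>z\<in>A. cinner z (\<psi> - y') = 0)"
    define d where "d = y' - y"
    have dA: "d \<in> A" using csub_facts(5)[OF A, of y' y] y(1) y' unfolding d_def by blast
    have e: "(\<psi> - y) - (\<psi> - y') = d" by (simp add: d_def)
    have c1: "cinner d (\<psi> - y) = 0" using y(2) dA by blast
    have c2: "cinner d (\<psi> - y') = 0" using y' dA by blast
    have "cinner d d = cinner d ((\<psi> - y) - (\<psi> - y'))" by (simp only: e)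
    also have "\<dots> = 0" unfolding cinner_diff_right[of d "\<psi> - y" "\<psi> - y'"] c1 c2 by simp
    finally have "cinner d d = 0" .
    then have "d = 0" by (simp only: cinner_self_eq_0)
    then show "y' = y" by (simp add: d_def)
  qed
qed

lemma proj_props:
  fixes A :: "'a::chilbert set"
  assumes A: "closed_csubspace A"
  shows "proj A \<psi> \<in> A" "\<forall>z\<in>A. cinner z (\<psi> - proj A \<psi>) = 0"
proof -
  have "proj A \<psi> \<in> A \<and> (\<forall>z\<in>A. cinner z (\<psi> - proj A \<psi>) = 0)"
    unfolding proj_def by (rule theI'[OF proj_ex1[OF A, of \<psi>]])
  then show "proj A \<psi> \<in> A" "\<forall>z\<in>A. cinner z (\<psi> - proj A \<psi>) = 0" by blast+
qed

lemma proj_eq: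
  fixes A :: "'a::chilbert set"
  assumes A: "closed_csubspace A" and "y \<in> A" "\<forall>z\<in>A. cinner z (\<psi> - y) = 0"
  shows "proj A \<psi> = y"
  unfolding proj_def by (rule the1_equality[OF proj_ex1[OF A, of \<psi>]]) (use assms in blast)

lemma pyth:
  fixes A :: "'a::chilbert set"
  assumes A: "closed_csubspace A"
  shows "(norm \<psi>)^2 = (norm (proj A \<psi>))^2 + (norm (\<psi> - proj A \<psi>))^2"
proof -
  have "cinner (proj A \<psi>) (\<psi> - proj A \<psi>) = 0" using proj_props[OF A] by blast
  then show ?thesis using norm_add_sq[of "proj A \<psi>" "\<psi> - proj A \<psi>"] by simp
qed

lemma ebar_one_vec:
  fixes A :: "'a::chilbert set"
  assumes A: "closed_csubspace A" and u: "u \<noteq> 0"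
  shows "(norm (proj A u))^2 / (norm u)^2 = 1 \<longleftrightarrow> u \<in> A"
proof
  assume "(norm (proj A u))^2 / (norm u)^2 = 1"
  then have "(norm (proj A u))^2 = (norm u)^2" using u by (simp add: field_simps)
  then have "(norm (u - proj A u))^2 = 0" using pyth[OF A, of u] by simp
  then have "u = proj A u" by simp
  then show "u \<in> A" using proj_props(1)[OF A, of u] by simp
next
  assume "u \<in> A"
  then have "proj A u = u" using proj_eq[OF A, of u u] by simp
  then show "(norm (proj A u))^2 / (norm u)^2 = 1" using u by simp
qed

lemma ebar_zero_vec:
  fixes A :: "'a::chilbert set"
  assumes A: "closed_csubspace A" and that: "u \<noteq> 0"
  shows "(norm (proj A u))^2 / (norm u)^2 = 0 \<longleftrightarrow> (\<forall>z\<in>A. cinner z u = 0)"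
proof
  assume "(norm (proj A u))^2 / (norm u)^2 = 0"
  then have "proj A u = 0" using that by simp
  then show "\<forall>z\<in>A. cinner z u = 0" using proj_props(2)[OF A, of u] by simp
next
  assume "\<forall>z\<in>A. cinner z u = 0"
  then have "proj A u = 0" using proj_eq[OF A, of 0 u] csub_facts(1)[OF A] by simp
  then show "(norm (proj A u))^2 / (norm u)^2 = 0" by simp
qed

lemma in_ray_iff: "x \<in> ray \<psi> \<longleftrightarrow> (\<exists>c. x = scaleC c \<psi>)"
  unfolding ray_def by blast

lemma in_ray_self: "(\<psi>::'a::chilbert) \<in> ray \<psi>"
  unfolding in_ray_iff by (rule exI[of _ 1]) (simp only: scaleC_one)

lemma rep_ray:
  assumes "(\<psi>::'a::chilbert) \<noteq> 0"
  shows "\<exists>c. c \<noteq> 0 \<and> rep (ray \<psi>) = scaleC c \<psi>"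
proof -
  have "\<exists>u. u \<in> ray \<psi> \<and> u \<noteq> 0" using in_ray_self assms by blast
  then have r: "rep (ray \<psi>) \<in> ray \<psi> \<and> rep (ray \<psi>) \<noteq> 0" unfolding rep_def by (rule someI_ex)
  then obtain c where c: "rep (ray \<psi>) = scaleC c \<psi>" unfolding in_ray_iff by blast
  have "c \<noteq> 0"
  proof
    assume "c = 0"
    then have "rep (ray \<psi>) = 0" using c by simp
    then show False using r by blast
  qed
  then show ?thesis using c by blast
qed

lemma mem_scaleC_iff:
  assumes A: "closed_csubspace (A::'a::chilbert set)" and c: "c \<noteq> 0"
  shows "scaleC c x \<in> A \<longleftrightarrow> x \<in> A"
proof
  assume "scaleC c x \<in> A"
  then have "scaleC (1/c) (scaleC c x) \<in> A" using csub_facts(3)[OF A] by blast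
  then show "x \<in> A" using c by (simp add: scaleC_scaleC scaleC_one)
qed (use csub_facts(3)[OF A] in blast)

lemma ebar_ray_one:
  assumes A: "closed_csubspace (A::'a::chilbert set)" and p: "\<psi> \<noteq> 0"
  shows "ebar (ray \<psi>) A = 1 \<longleftrightarrow> \<psi> \<in> A"
proof -
  obtain c where c: "c \<noteq> 0" "rep (ray \<psi>) = scaleC c \<psi>" using rep_ray[OF p] by blast
  have "norm (scaleC c \<psi>) \<noteq> 0" using c p by (simp add: norm_scaleC)
  then have nz: "scaleC c \<psi> \<noteq> 0" by auto
  show ?thesis unfolding ebar_def c(2) ebar_one_vec[OF A nz] mem_scaleC_iff[OF A c(1)] ..
qed

lemma ebar_ray_zero:
  assumes A: "closed_csubspace (A::'a::chilbert set)" and p: "\<psi> \<noteq> 0"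
  shows "ebar (ray \<psi>) A = 0 \<longleftrightarrow> (\<forall>z\<in>A. cinner z \<psi> = 0)"
proof -
  obtain c where c: "c \<noteq> 0" "rep (ray \<psi>) = scaleC c \<psi>" using rep_ray[OF p] by blast
  have "norm (scaleC c \<psi>) \<noteq> 0" using c p by (simp add: norm_scaleC)
  then have nz: "scaleC c \<psi> \<noteq> 0" by auto
  show ?thesis unfolding ebar_def c(2) ebar_zero_vec[OF A nz]
    using c(1) by (simp add: cinner_scaleC_right)
qed

lemma ray_scale:
  assumes c: "c \<noteq> 0"
  shows "ray (scaleC c (w::'a::chilbert)) = ray w"
proof (rule set_eqI)
  fix x
  show "x \<in> ray (scaleC c w) \<longleftrightarrow> x \<in> ray w"
    unfolding in_ray_iff
  proof
    assume "\<exists>d. x = scaleC d (scaleC c w)"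
    then obtain d where "x = scaleC d (scaleC c w)" by blast
    then have "x = scaleC (d * c) w" by (simp only: scaleC_scaleC)
    then show "\<exists>e. x = scaleC e w" by blast
  next
    assume "\<exists>d. x = scaleC d w"
    then obtain d where x: "x = scaleC d w" by blast
    have "scaleC (d / c) (scaleC c w) = scaleC (d / c * c) w" by (simp only: scaleC_scaleC)
    also have "d / c * c = d" using c by simp
    finally have "x = scaleC (d / c) (scaleC c w)" using x by simp
    then show "\<exists>e. x = scaleC e (scaleC c w)" by blast
  qed
qed

lemma ray_csub:
  assumes w: "(w::'a::chilbert) \<noteq> 0"
  shows "closed_csubspace (ray w)"
proof -
  define k where "k = complex_of_real ((norm w)^2)"
  have k: "k \<noteq> 0" using w by (simp add: k_def)
  define w' where "w' = scaleC (1/k) w"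
  have eq: "ray w = {y. id y = ((\<lambda>c. scaleC c w') \<circ> cinner w) y}"
  proof (rule set_eqI, rule iffI)
    fix y assume "y \<in> ray w"
    then obtain c where y: "y = scaleC c w" unfolding in_ray_iff by blast
    have "cinner w y = c * k" by (simp add: y cinner_scaleC_right cinner_self_norm k_def)
    then show "y \<in> {y. id y = ((\<lambda>c. scaleC c w') \<circ> cinner w) y}"
      using k by (simp add: y w'_def scaleC_scaleC)
  next
    fix y assume "y \<in> {y. id y = ((\<lambda>c. scaleC c w') \<circ> cinner w) y}"
    then have "y = scaleC (cinner w y * (1/k)) w" by (simp add: w'_def scaleC_scaleC)
    then show "y \<in> ray w" unfolding in_ray_iff by blast
  qed
  have bl1: "bounded_linear (cinner w)"
  proof (rule bounded_linear_intro[where K = "norm w"])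
    show "\<And>x y. cinner w (x + y) = cinner w x + cinner w y" by (rule cinner_add_right)
    show "\<And>r x. cinner w (scaleR r x) = scaleR r (cinner w x)"
    proof -
      fix r x
      have "cinner w (scaleR r x) = cinner w (scaleC (complex_of_real r) x)" by (simp only: scaleC_of_real)
      also have "\<dots> = complex_of_real r * cinner w x" by (rule cinner_scaleC_right)
      also have "\<dots> = scaleR r (cinner w x)" by (simp only: scaleR_conv_of_real)
      finally show "cinner w (scaleR r x) = scaleR r (cinner w x)" .
    qed
    show "\<And>x. norm (cinner w x) \<le> norm x * norm w"
    proof -
      fix x
      have "cmod (cinner w x) \<le> norm w * norm x" by (rule cauchy_schwarz)
      then show "norm (cinner w x) \<le> norm x * norm w" by (simp only: mult.commute)
    qed
  qed
  have bl2: "bounded_linear (\<lambda>c. scaleC c w')"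
  proof (rule bounded_linear_intro[where K = "norm w'"])
    show "\<And>x y. scaleC (x + y) w' = scaleC x w' + scaleC y w'" by (rule scaleC_add_left)
    show "\<And>r x. scaleC (scaleR r x) w' = scaleR r (scaleC x w')"
    proof -
      fix r x
      have "scaleC (scaleR r x) w' = scaleC (complex_of_real r * x) w'" by (simp only: scaleR_conv_of_real)
      also have "\<dots> = scaleC (complex_of_real r) (scaleC x w')" by (simp only: scaleC_scaleC)
      also have "\<dots> = scaleR r (scaleC x w')" by (rule scaleC_of_real)
      finally show "scaleC (scaleR r x) w' = scaleR r (scaleC x w')" .
    qed
    show "\<And>x. norm (scaleC x w') \<le> norm x * norm w'" by (simp add: norm_scaleC)
  qed
  have bl: "bounded_linear ((\<lambda>c. scaleC c w') \<circ> cinner w)"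
    using bounded_linear_compose[OF bl2 bl1] by (simp only: comp_def)
  have cid: "continuous_on UNIV (id :: 'a \<Rightarrow> 'a)"
    using continuous_on_id by (simp only: id_def)
  have "closed (ray w)" unfolding eq
    by (rule closed_Collect_eq[OF cid linear_continuous_on[OF bl]])
  moreover have "0 \<in> ray w" unfolding in_ray_iff by (rule exI[of _ 0]) simp
  moreover have "\<forall>x\<in>ray w. \<forall>y\<in>ray w. x + y \<in> ray w"
  proof (intro ballI)
    fix x y assume "x \<in> ray w" "y \<in> ray w"
    then obtain a b where "x = scaleC a w" "y = scaleC b w" unfolding in_ray_iff by blast
    then have "x + y = scaleC (a + b) w" by (simp only: scaleC_add_left)
    then show "x + y \<in> ray w" unfolding in_ray_iff by blast
  qed
  moreover have "\<forall>c. \<forall>x\<in>ray w. scaleC c x \<in> ray w"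
  proof (intro allI ballI)
    fix c x assume "x \<in> ray w"
    then obtain a where "x = scaleC a w" unfolding in_ray_iff by blast
    then have "scaleC c x = scaleC (c * a) w" by (simp only: scaleC_scaleC)
    then show "scaleC c x \<in> ray w" unfolding in_ray_iff by blast
  qed
  ultimately show ?thesis unfolding closed_csubspace_def by blast
qed


lemma ray_in_P: "(x::'a::chilbert) \<noteq> 0 \<Longrightarrow> ray x \<in> rays_P"
  unfolding rays_P_def by blast

lemma rays_P_elim: "(r::'a::chilbert set) \<in> rays_P \<Longrightarrow> \<exists>x. x \<noteq> 0 \<and> r = ray x"
  unfolding rays_P_def by blast

lemma ray_in_L: "(x::'a::chilbert) \<noteq> 0 \<Longrightarrow> ray x \<in> subspaces_L"
  unfolding subspaces_L_def using ray_csub by blast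

theorem proposition3p7:
  fixes fs :: "'h::chilbert set \<Rightarrow> 'k::chilbert set"
    and fa :: "'k set \<Rightarrow> 'h set"
  assumes "chu_morphism (rays_P :: 'h set set) subspaces_L ebar
                        (rays_P :: 'k set set) subspaces_L ebar fs fa"
    and "inj_on fs rays_P"
  shows "\<forall>\<phi> \<psi> :: 'h. \<phi> \<noteq> 0 \<longrightarrow> \<psi> \<noteq> 0 \<longrightarrow>
           (cinner \<phi> \<psi> = 0 \<longleftrightarrow> rays_orth (fs (ray \<phi>)) (fs (ray \<psi>)))"
proof (intro allI impI)
  fix \<phi> \<psi> :: 'h assume p: "\<phi> \<noteq> 0" and q: "\<psi> \<noteq> 0"
  have chu1: "\<forall>x\<in>(rays_P::'h set set). fs x \<in> rays_P"
    and chu2: "\<forall>a'\<in>(subspaces_L::'k set set). fa a' \<in> subspaces_L"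
    and chu3: "\<forall>x\<in>(rays_P::'h set set). \<forall>a'\<in>(subspaces_L::'k set set). ebar x (fa a') = ebar (fs x) a'"
    using assms(1) unfolding chu_morphism_def by blast+
  have fsP: "\<exists>u. u \<noteq> 0 \<and> fs (ray x) = ray u" if "x \<noteq> 0" for x :: 'h
    using rays_P_elim chu1 ray_in_P[OF that] by blast
  obtain v where v: "v \<noteq> 0" "fs (ray \<phi>) = ray v" using fsP[OF p] by blast
  obtain w where w: "w \<noteq> 0" "fs (ray \<psi>) = ray w" using fsP[OF q] by blast
  define A where "A = fa (ray w)"
  have wL: "ray w \<in> subspaces_L" by (rule ray_in_L[OF w(1)])
  have wC: "closed_csubspace (ray w)" by (rule ray_csub[OF w(1)])
  have AL: "closed_csubspace A" using chu2 wL unfolding A_def subspaces_L_def by blast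
  have eq: "ebar (ray x) A = ebar (fs (ray x)) (ray w)" if "x \<noteq> 0" for x :: 'h
    using chu3 ray_in_P[OF that] wL unfolding A_def by blast
  have "ebar (ray \<psi>) A = ebar (ray w) (ray w)" using eq[OF q] w(2) by simp
  also have "\<dots> = 1" using ebar_ray_one[OF wC w(1)] in_ray_self[of w] by simp
  finally have "ebar (ray \<psi>) A = 1" .
  then have \<psi>A: "\<psi> \<in> A" using ebar_ray_one[OF AL q] by simp
  have key: "ebar (ray \<phi>) A = ebar (ray v) (ray w)" using eq[OF p] v(2) by simp
  show "cinner \<phi> \<psi> = 0 \<longleftrightarrow> rays_orth (fs (ray \<phi>)) (fs (ray \<psi>))"
  proof
    assume o: "cinner \<phi> \<psi> = 0"
    have Asub: "\<forall>x\<in>A. x \<in> ray \<psi>"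
    proof
      fix x assume xA: "x \<in> A"
      show "x \<in> ray \<psi>"
      proof (cases "x = 0")
        case True then show ?thesis unfolding in_ray_iff by (intro exI[of _ 0]) simp
      next
        case False
        have "ebar (ray x) A = 1" using ebar_ray_one[OF AL False] xA by simp
        then have e1: "ebar (fs (ray x)) (ray w) = 1" using eq[OF False] by simp
        obtain u where u: "u \<noteq> 0" "fs (ray x) = ray u" using fsP[OF False] by blast
        have "u \<in> ray w" using e1 ebar_ray_one[OF wC u(1)] u(2) by simp
        then obtain c where c: "u = scaleC c w" unfolding in_ray_iff by blast
        have "c \<noteq> 0"
        proof
          assume "c = 0"
          then have "u = 0" using c by simp
          then show False using u(1) by blast
        qed
        then have "ray u = ray w" using c ray_scale by simp
        then have "fs (ray x) = fs (ray \<psi>)" using u(2) w(2) by simp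
        then have "ray x = ray \<psi>"
          using inj_onD[OF assms(2)] ray_in_P[OF False] ray_in_P[OF q] by blast
        then show "x \<in> ray \<psi>" using in_ray_self[of x] by simp
      qed
    qed
    have "\<forall>z\<in>A. cinner z \<phi> = 0"
    proof
      fix z assume "z \<in> A"
      then obtain c where zc: "z = scaleC c \<psi>" using Asub unfolding in_ray_iff by blast
      have "cinner \<psi> \<phi> = 0" using o cinner_commute[of \<psi> \<phi>] by simp
      then show "cinner z \<phi> = 0" using zc by (simp add: cinner_scaleC_left)
    qed
    then have "ebar (ray \<phi>) A = 0" using ebar_ray_zero[OF AL p] by simp
    then have "ebar (ray v) (ray w) = 0" using key by simp
    then have vo: "\<forall>z\<in>ray w. cinner z v = 0" using ebar_ray_zero[OF wC v(1)] by simp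
    show "rays_orth (fs (ray \<phi>)) (fs (ray \<psi>))" unfolding v(2) w(2) rays_orth_def
    proof (intro ballI)
      fix a b assume ab: "a \<in> ray v" "b \<in> ray w"
      then obtain c where a: "a = scaleC c v" unfolding in_ray_iff by blast
      have "cinner b v = 0" using vo ab(2) by blast
      then have "cinner v b = 0" using cinner_commute[of v b] by simp
      then show "cinner a b = 0" using a by (simp add: cinner_scaleC_left)
    qed
  next
    assume ro: "rays_orth (fs (ray \<phi>)) (fs (ray \<psi>))"
    have "\<forall>z\<in>ray w. cinner z v = 0"
    proof
      fix z assume "z \<in> ray w"
      then have "cinner v z = 0" using ro in_ray_self[of v] unfolding v(2) w(2) rays_orth_def by blast
      then show "cinner z v = 0" using cinner_commute[of z v] by simp
    qed
    then have "ebar (ray v) (ray w) = 0" using ebar_ray_zero[OF wC v(1)] by simp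
    then have "ebar (ray \<phi>) A = 0" using key by simp
    then have "\<forall>z\<in>A. cinner z \<phi> = 0" using ebar_ray_zero[OF AL p] by simp
    then have "cinner \<psi> \<phi> = 0" using \<psi>A by blast
    then show "cinner \<phi> \<psi> = 0" using cinner_commute[of \<phi> \<psi>] by simp
  qed
qed

end
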